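(* For any finite simple graph $X$ and any vertex $v$ of $X$, exactly half of the elements $s=((x_1,k_1),\dots,(x_n,k_n))$ of $\mathrm{Fix}(\mathbf{F}^\uparrow)$ satisfy $x_v=1$.
   Context: Let $X$ be a finite simple graph with vertices $1,\dots,n$; $d(v)$ is the degree of $v$ and $n[v]$ the closed neighborhood of $v$. An extended vertex state is $s_v=(x_v,k_v)\in\{0,1\}\times\{1,\dots,d(v)+1\}$; $\mathcal{S}$ is the product of these sets. Let $\sigma(x[v])=|\{u\in n[v]:x_u=1\}|$. The increasing vertex function maps $(x_v,k_v)$ to $(x_v',k_v')$ with $x_v'=1$ iff $\sigma(x[v])\ge k_v$ (else $0$), and $k_v'=k_v+1$ if $x_v=0$ and $\sigma(x[v])\ge k_v$, else $k_v'=k_v$. $\mathbf{F}^\uparrow:\mathcal{S}\to\mathcal{S}$ applies this vertex function at all vertices simultaneously, and $\mathrm{Fix}(\mathbf{F}^\uparrow)$ is its set of fixed points. *)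

theory Defs
  imports "HOL-Library.FuncSet"
begin

definition verts :: "nat \<Rightarrow> nat set" where
  "verts n = {1..n}"

definition simple_graph :: "nat \<Rightarrow> (nat \<Rightarrow> nat \<Rightarrow> bool) \<Rightarrow> bool" where
  "simple_graph n E \<longleftrightarrow>
     (\<forall>u\<in>verts n. \<forall>v\<in>verts n. E u v \<longrightarrow> E v u) \<and> (\<forall>v\<in>verts n. \<not> E v v)"

definition nbhd :: "nat \<Rightarrow> (nat \<Rightarrow> nat \<Rightarrow> bool) \<Rightarrow> nat \<Rightarrow> nat set" where
  "nbhd n E v = {u \<in> verts n. E v u}"

definition degree :: "nat \<Rightarrow> (nat \<Rightarrow> nat \<Rightarrow> bool) \<Rightarrow> nat \<Rightarrow> nat" where
  "degree n E v = card (nbhd n E v)"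

definition closed_nbhd :: "nat \<Rightarrow> (nat \<Rightarrow> nat \<Rightarrow> bool) \<Rightarrow> nat \<Rightarrow> nat set" where
  "closed_nbhd n E v = insert v (nbhd n E v)"

definition ext_states :: "nat \<Rightarrow> (nat \<Rightarrow> nat \<Rightarrow> bool) \<Rightarrow> (nat \<Rightarrow> nat \<times> nat) set" where
  "ext_states n E = (\<Pi>\<^sub>E v\<in>verts n. {0,1} \<times> {1..degree n E v + 1})"

definition sigma :: "nat \<Rightarrow> (nat \<Rightarrow> nat \<Rightarrow> bool) \<Rightarrow> (nat \<Rightarrow> nat \<times> nat) \<Rightarrow> nat \<Rightarrow> nat" where
  "sigma n E s v = card {u \<in> closed_nbhd n E v. fst (s u) = 1}"

definition inc_vertex_fun :: "nat \<Rightarrow> (nat \<Rightarrow> nat \<Rightarrow> bool) \<Rightarrow> (nat \<Rightarrow> nat \<times> nat) \<Rightarrow> nat \<Rightarrow> nat \<times> nat" where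
  "inc_vertex_fun n E s v =
     (let (x, k) = s v; sg = sigma n E s v in
      (if sg \<ge> k then 1 else 0,
       if x = 0 \<and> sg \<ge> k then k + 1 else k))"

definition F_up :: "nat \<Rightarrow> (nat \<Rightarrow> nat \<Rightarrow> bool) \<Rightarrow> (nat \<Rightarrow> nat \<times> nat) \<Rightarrow> (nat \<Rightarrow> nat \<times> nat)" where
  "F_up n E s = (\<lambda>v\<in>verts n. inc_vertex_fun n E s v)"

definition Fix_up :: "nat \<Rightarrow> (nat \<Rightarrow> nat \<Rightarrow> bool) \<Rightarrow> (nat \<Rightarrow> nat \<times> nat) set" where
  "Fix_up n E = {s \<in> ext_states n E. F_up n E s = s}"

end

theory Submission
  imports Defs
begin

definition phi :: "nat \<Rightarrow> (nat \<Rightarrow> nat \<Rightarrow> bool) \<Rightarrow> (nat \<Rightarrow> nat \<times> nat) \<Rightarrow> (nat \<Rightarrow> nat \<times> nat)" where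
  "phi n E s = (\<lambda>u\<in>verts n. (1 - fst (s u), degree n E u + 2 - snd (s u)))"

lemma es_in:
  assumes "s \<in> ext_states n E" "u \<in> verts n"
  shows "fst (s u) \<in> {0,1}" "snd (s u) \<in> {1..degree n E u + 1}"
proof -
  have "s u \<in> {0,1} \<times> {1..degree n E u + 1}" using assms by (auto simp: ext_states_def PiE_iff)
  then show "fst (s u) \<in> {0,1}" "snd (s u) \<in> {1..degree n E u + 1}" by (auto simp: mem_Times_iff)
qed

lemma es_out:
  assumes "s \<in> ext_states n E" "u \<notin> verts n"
  shows "s u = undefined"
  using assms by (auto simp: ext_states_def PiE_iff extensional_def)

lemma fix_char:
  "s \<in> Fix_up n E \<longleftrightarrow> s \<in> ext_states n E \<and>
     (\<forall>u\<in>verts n. fst (s u) = 1 \<longleftrightarrow> sigma n E s u \<ge> snd (s u))"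
proof
  assume a: "s \<in> Fix_up n E"
  hence es: "s \<in> ext_states n E" and eq: "F_up n E s = s" by (auto simp: Fix_up_def)
  show "s \<in> ext_states n E \<and> (\<forall>u\<in>verts n. fst (s u) = 1 \<longleftrightarrow> sigma n E s u \<ge> snd (s u))"
  proof (intro conjI ballI es)
    fix u assume u: "u \<in> verts n"
    have "inc_vertex_fun n E s u = s u" using eq u unfolding F_up_def by (metis restrict_apply')
    moreover have "fst (s u) \<in> {0,1}" using es_in[OF es u] by simp
    ultimately show "fst (s u) = 1 \<longleftrightarrow> sigma n E s u \<ge> snd (s u)"
      unfolding inc_vertex_fun_def by (cases "s u") (auto simp: Let_def split: if_splits)
  qed
next
  assume a: "s \<in> ext_states n E \<and> (\<forall>u\<in>verts n. fst (s u) = 1 \<longleftrightarrow> sigma n E s u \<ge> snd (s u))"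
  have "F_up n E s = s"
  proof
    fix u
    show "F_up n E s u = s u"
    proof (cases "u \<in> verts n")
      case True
      have "fst (s u) \<in> {0,1}" using a True es_in by blast
      then show ?thesis using a True unfolding F_up_def inc_vertex_fun_def
        by (cases "s u") (auto simp: Let_def)
    next
      case False
      have "s u = undefined" using es_out[OF conjunct1[OF a] False] .
      then show ?thesis using False unfolding F_up_def by simp
    qed
  qed
  with a show "s \<in> Fix_up n E" by (auto simp: Fix_up_def)
qed

lemma sigma_phi:
  assumes g: "simple_graph n E" and u: "u \<in> verts n" and es: "s \<in> ext_states n E"
  shows "sigma n E (phi n E s) u = degree n E u + 1 - sigma n E s u"
proof -
  let ?C = "closed_nbhd n E u"
  have fin: "finite (nbhd n E u)" by (simp add: nbhd_def verts_def)
  have nin: "u \<notin> nbhd n E u" using g u by (auto simp: nbhd_def simple_graph_def)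
  have cC: "card ?C = degree n E u + 1" using fin nin by (simp add: closed_nbhd_def degree_def)
  have sub: "?C \<subseteq> verts n" using u by (auto simp: closed_nbhd_def nbhd_def)
  have bin: "\<And>w. w \<in> ?C \<Longrightarrow> fst (s w) \<in> {0,1}" using es sub es_in by blast
  have "{w \<in> ?C. fst (phi n E s w) = 1} = ?C - {w \<in> ?C. fst (s w) = 1}"
  proof (intro set_eqI iffI)
    fix w assume "w \<in> {w \<in> ?C. fst (phi n E s w) = 1}"
    then show "w \<in> ?C - {w \<in> ?C. fst (s w) = 1}" using sub by (auto simp: phi_def)
  next
    fix w assume w: "w \<in> ?C - {w \<in> ?C. fst (s w) = 1}"
    then have "fst (s w) = 0" using bin[of w] by auto
    then show "w \<in> {w \<in> ?C. fst (phi n E s w) = 1}" using w sub by (auto simp: phi_def)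
  qed
  hence "sigma n E (phi n E s) u = card ?C - card {w \<in> ?C. fst (s w) = 1}"
    unfolding sigma_def
  proof (simp only:)
    show "card (?C - {w \<in> ?C. fst (s w) = 1}) = card ?C - card {w \<in> ?C. fst (s w) = 1}"
      by (rule card_Diff_subset) (use fin in \<open>auto simp: closed_nbhd_def\<close>)
  qed
  thus ?thesis using cC by (simp add: sigma_def)
qed

lemma sigma_le:
  assumes g: "simple_graph n E" and u: "u \<in> verts n"
  shows "sigma n E s u \<le> degree n E u + 1"
proof -
  have fin: "finite (nbhd n E u)" by (simp add: nbhd_def verts_def)
  have "sigma n E s u \<le> card (closed_nbhd n E u)"
    unfolding sigma_def closed_nbhd_def by (rule card_mono) (use fin in auto)
  also have "\<dots> \<le> degree n E u + 1" using fin by (simp add: closed_nbhd_def degree_def card_insert_le_m1)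
  finally show ?thesis .
qed

lemma phi_fix:
  assumes g: "simple_graph n E" and s: "s \<in> Fix_up n E"
  shows "phi n E s \<in> Fix_up n E"
proof -
  have es: "s \<in> ext_states n E" and c: "\<forall>u\<in>verts n. fst (s u) = 1 \<longleftrightarrow> sigma n E s u \<ge> snd (s u)"
    using s fix_char by auto
  have es': "phi n E s \<in> ext_states n E"
  proof -
    have "\<And>u. u \<in> verts n \<Longrightarrow> phi n E s u \<in> {0,1} \<times> {1..degree n E u + 1}"
    proof -
      fix u assume u: "u \<in> verts n"
      have "fst (s u) \<in> {0,1}" "snd (s u) \<in> {1..degree n E u + 1}" using es_in[OF es u] by auto
      then show "phi n E s u \<in> {0,1} \<times> {1..degree n E u + 1}" using u by (auto simp: phi_def)
    qed
    then show ?thesis unfolding ext_states_def by (auto simp: phi_def PiE_iff)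
  qed
  have "\<forall>u\<in>verts n. fst (phi n E s u) = 1 \<longleftrightarrow> sigma n E (phi n E s) u \<ge> snd (phi n E s u)"
  proof
    fix u assume u: "u \<in> verts n"
    have x: "fst (s u) \<in> {0,1}" and k: "snd (s u) \<in> {1..degree n E u + 1}"
      using es_in[OF es u] by auto
    have le: "sigma n E s u \<le> degree n E u + 1" using sigma_le[OF g u] .
    show "fst (phi n E s u) = 1 \<longleftrightarrow> sigma n E (phi n E s) u \<ge> snd (phi n E s u)"
    proof -
      have cu: "fst (s u) = 1 \<longleftrightarrow> sigma n E s u \<ge> snd (s u)" using c u by blast
      show ?thesis unfolding sigma_phi[OF g u es] using x k le cu u by (auto simp: phi_def)
    qed
  qed
  thus ?thesis using es' fix_char[of "phi n E s" n E] by simp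
qed

lemma phi_phi:
  assumes s: "s \<in> ext_states n E"
  shows "phi n E (phi n E s) = s"
proof
  fix u show "phi n E (phi n E s) u = s u"
  proof (cases "u \<in> verts n")
    case True
    have x: "fst (s u) \<in> {0,1}" and k: "snd (s u) \<in> {1..degree n E u + 1}"
      using es_in[OF s True] by auto
    then show ?thesis using True by (cases "s u") (auto simp: phi_def)
  next
    case False then show ?thesis using es_out[OF s False] by (auto simp: phi_def)
  qed
qed

theorem lemma4p2:
  fixes n :: nat and E :: "nat \<Rightarrow> nat \<Rightarrow> bool" and v :: nat
  assumes "simple_graph n E" and "v \<in> verts n"
  shows "2 * card {s \<in> Fix_up n E. fst (s v) = 1} = card (Fix_up n E)"
proof -
  let ?F = "Fix_up n E"
  let ?A = "{s \<in> ?F. fst (s v) = 1}"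
  let ?B = "{s \<in> ?F. fst (s v) \<noteq> 1}"
  have finF: "finite ?F"
  proof -
    have "finite (ext_states n E)" unfolding ext_states_def by (rule finite_PiE) (auto simp: verts_def)
    then show ?thesis by (rule finite_subset[rotated]) (auto simp: Fix_up_def)
  qed
  have bin: "\<And>s. s \<in> ?F \<Longrightarrow> fst (s v) \<in> {0,1}"
  proof -
    fix s assume "s \<in> ?F"
    then have "s \<in> ext_states n E" by (simp add: Fix_up_def)
    then show "fst (s v) \<in> {0,1}" using es_in(1) assms(2) by blast
  qed
  have inj: "inj_on (phi n E) ?A"
  proof (rule inj_onI)
    fix a b assume "a \<in> ?A" "b \<in> ?A" "phi n E a = phi n E b"
    then have "a \<in> ext_states n E" "b \<in> ext_states n E" by (auto simp: Fix_up_def)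
    then show "a = b" using phi_phi[of a n E] phi_phi[of b n E] \<open>phi n E a = phi n E b\<close> by metis
  qed
  have img: "phi n E ` ?A = ?B"
  proof
    show "phi n E ` ?A \<subseteq> ?B"
    proof
      fix y assume "y \<in> phi n E ` ?A"
      then obtain a where a: "a \<in> ?A" and y: "y = phi n E a" by blast
      have "y \<in> ?F" using phi_fix[OF assms(1)] a y by blast
      moreover have "fst (y v) = 0" using a y assms(2) by (simp add: phi_def)
      ultimately show "y \<in> ?B" by simp
    qed
  next
    show "?B \<subseteq> phi n E ` ?A"
    proof
      fix s assume s: "s \<in> ?B"
      hence es: "s \<in> ext_states n E" by (simp add: Fix_up_def)
      have "fst (s v) = 0" using bin s by auto
      hence f1: "fst (phi n E s v) = 1" using assms(2) by (simp add: phi_def)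
      have "phi n E s \<in> ?F" using phi_fix[OF assms(1)] s by blast
      hence "phi n E s \<in> ?A" using f1 by simp
      moreover have "s = phi n E (phi n E s)" using phi_phi[OF es] by simp
      ultimately show "s \<in> phi n E ` ?A" by blast
    qed
  qed
  have "card ?B = card ?A" using card_image[OF inj] img by simp
  moreover have "card ?F = card ?A + card ?B"
  proof -
    have "?F = ?A \<union> ?B" by blast
    then show ?thesis using finF card_Un_disjoint[of ?A ?B] by (simp add: Int_def)
  qed
  ultimately show ?thesis by simp
qed

end
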